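(* Let $\lambda$ be a real number with $\lambda\neq 0$ and $\lambda\ne -1$, and let $x$ be a real number with $0<|x|<1/|\lambda|$. Then \[ e_{\lambda}(x,\ 1|2)=\frac{1}{1+\lambda}\cdot\frac{1}{x}\int_{0}^{x}\frac{1}{t}\big(e_{\lambda}(t)-1\big)\,dt+\frac{1}{x}\,\frac{\lambda}{(1+\lambda)^{2}}\big(e_{\lambda}(x)-1\big)+\Big(\frac{\lambda}{1+\lambda}\Big)^{2}e_{\lambda}(x). \]
   Context: For nonzero real $\lambda$: $(1)_{0,\lambda}=1$, $(1)_{n,\lambda}=1(1-\lambda)(1-2\lambda)\cdots(1-(n-1)\lambda)$ for $n\ge1$. The degenerate exponential is $e_\lambda(t)=(1+\lambda t)^{1/\lambda}=\sum_{n\ge0}(1)_{n,\lambda}t^n/n!$ for $|\lambda t|<1$. The degenerate polyexponential function is $e_{\lambda}(x,\ \delta|k)=\sum_{n=0}^{\infty}\frac{(1)_{n,\lambda}}{n!\,(n+\delta)^{k}}x^{n}$; in particular $e_\lambda(x,1|2)=\sum_{n\ge0}\frac{(1)_{n,\lambda}}{n!(n+1)^2}x^n$. The integrand $(e_\lambda(t)-1)/t$ is extended continuously at $t=0$. *)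

theory Defs
  imports "HOL-Analysis.Analysis"
begin

definition deg_ff :: "real \<Rightarrow> nat \<Rightarrow> real" where
  "deg_ff lam n = (\<Prod>k<n. 1 - real k * lam)"

text \<open>Degenerate exponential e_lambda(t) = (1 + lambda t)^(1/lambda), used for |lambda t| < 1.\<close>
definition deg_exp :: "real \<Rightarrow> real \<Rightarrow> real" where
  "deg_exp lam t = (1 + lam * t) powr (1 / lam)"

definition deg_polyexp :: "real \<Rightarrow> real \<Rightarrow> real \<Rightarrow> nat \<Rightarrow> real" where
  "deg_polyexp lam x \<delta> k = (\<Sum>n. deg_ff lam n / (fact n * (real n + \<delta>) ^ k) * x ^ n)"

text \<open>Integrand (e_lambda(t) - 1)/t, continuously extended by its limit 1 at t = 0.\<close>
definition deg_integrand :: "real \<Rightarrow> real \<Rightarrow> real" where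
  "deg_integrand lam t = (if t = 0 then 1 else (deg_exp lam t - 1) / t)"

end

theory Submission
  imports Defs
begin

definition acoef :: "real \<Rightarrow> nat \<Rightarrow> real" where
  "acoef lam n = deg_ff lam n / fact n"

lemma acoef_0[simp]: "acoef lam 0 = 1"
  by (simp add: acoef_def deg_ff_def)

lemma acoef_Suc: "acoef lam (Suc n) = acoef lam n * (1 - real n * lam) / (real n + 1)"
  by (simp add: acoef_def deg_ff_def lessThan_Suc field_simps)

lemma acoef_gchoose: "lam \<noteq> 0 \<Longrightarrow> ((1/lam) gchoose n) * lam ^ n = acoef lam n"
proof -
  assume l: "lam \<noteq> 0"
  have "((1/lam) gchoose n) * lam ^ n = (\<Prod>i=0..<n. 1/lam - of_nat i) * (\<Prod>i=0..<n. lam) / fact n"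
    by (simp add: gbinomial_prod_rev)
  also have "\<dots> = (\<Prod>i=0..<n. (1/lam - of_nat i) * lam) / fact n"
    by (simp add: prod.distrib)
  also have "\<dots> = (\<Prod>i<n. 1 - real i * lam) / fact n"
    using l by (intro arg_cong2[where f="(/)"] prod.cong) (auto simp: field_simps)
  finally show ?thesis by (simp add: acoef_def deg_ff_def)
qed

lemma exp_sums:
  assumes "lam \<noteq> 0" "\<bar>t\<bar> < 1 / \<bar>lam\<bar>"
  shows "(\<lambda>n. acoef lam n * t ^ n) sums deg_exp lam t"
proof -
  have "\<bar>lam * t\<bar> < 1" using assms by (simp add: abs_mult field_simps)
  from gen_binomial_real[OF this, of "1/lam"]
  show ?thesis
    by (simp add: deg_exp_def power_mult_distrib mult.assoc[symmetric] acoef_gchoose[OF assms(1)])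
qed

lemma abs_summable:
  assumes "lam \<noteq> 0" "\<bar>t\<bar> < 1 / \<bar>lam\<bar>"
  shows "summable (\<lambda>n. norm (acoef lam n * t ^ n))"
proof -
  define K where "K = (\<bar>t\<bar> + 1/\<bar>lam\<bar>) / 2"
  have K: "\<bar>t\<bar> < K" "K < 1/\<bar>lam\<bar>" "K \<ge> 0" using assms unfolding K_def by auto
  have "summable (\<lambda>n. acoef lam n * K ^ n)"
    using exp_sums[OF assms(1), of K] K by (auto simp: sums_iff)
  from powser_insidea[OF this, of t] K show ?thesis by simp
qed

lemma summable_bound:
  assumes "lam \<noteq> 0" "\<bar>t\<bar> < 1 / \<bar>lam\<bar>" "\<And>n. \<bar>c n\<bar> \<le> \<bar>acoef lam n\<bar>"
  shows "summable (\<lambda>n. c n * t ^ n)"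
proof (rule summable_comparison_test[OF _ abs_summable[OF assms(1,2)]])
  show "\<exists>N. \<forall>n\<ge>N. norm (c n * t ^ n) \<le> norm (acoef lam n * t ^ n)"
    using assms(3) by (auto simp: abs_mult intro!: mult_right_mono)
qed


lemma absdiv_le: fixes A d :: real assumes "1 \<le> d" shows "\<bar>A / d\<bar> \<le> \<bar>A\<bar>"
proof -
  have "\<bar>A / d\<bar> = \<bar>A\<bar> / d" using assms by (simp add: abs_div)
  also have "\<dots> \<le> \<bar>A\<bar>" using assms by (simp add: divide_le_eq mult_le_cancel_left1)
  finally show ?thesis .
qed
lemma absdiv_nat: fixes A :: real shows "\<bar>A / real n\<bar> \<le> \<bar>A\<bar>"
proof (cases "n = 0")
  case False then have "1 \<le> real n" by simp
  then show ?thesis by (rule absdiv_le)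
qed simp
lemma absdiv_Suc: fixes A :: real shows "\<bar>A / (real n + 1)\<bar> \<le> \<bar>A\<bar>" by (rule absdiv_le) simp
lemma absdiv_Suc2: fixes A :: real shows "\<bar>A / (real n + 1)^2\<bar> \<le> \<bar>A\<bar>"
  by (rule absdiv_le) (simp add: one_le_power)

lemma alg1: fixes A X x lam m :: real assumes "m \<ge> 0"
  shows "A * (1 - m * lam) / (m + 1) / (m + 1) * (x * X) = x * ((1 + lam) * (A / (m + 1)^2 * X) - lam * (A / (m + 1) * X))"
proof -
  have "m + 1 > 0" using assms by simp
  then show ?thesis by (simp add: divide_simps power2_eq_square) (simp add: algebra_simps)
qed
lemma alg2: fixes A X x lam m :: real assumes "m \<ge> 0"
  shows "A * (1 - m * lam) / (m + 1) * (x * X) = x * ((1 + lam) * (A / (m + 1) * X) - lam * (A * X))"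
  using assms by (simp add: field_simps)
lemma alg3: fixes F E S1 S2 x lam :: real assumes "x \<noteq> 0" "1 + lam \<noteq> 0"
  and "S2 = (F / x + lam * S1) / (1 + lam)" "S1 = ((E - 1) / x + lam * E) / (1 + lam)"
 shows "S2 = 1 / (1 + lam) * (1 / x) * F + (1 / x) * (lam / (1 + lam)^2) * (E - 1) + (lam / (1 + lam))^2 * E"
  using assms by (simp add: divide_simps power2_eq_square) (simp add: algebra_simps)

lemma main_identity:
  fixes lam x :: real
  assumes l0: "lam \<noteq> 0" and l1: "lam \<noteq> -1"
    and x0: "0 < \<bar>x\<bar>" and xr: "\<bar>x\<bar> < 1 / \<bar>lam\<bar>"
  shows "deg_polyexp lam x 1 2 =
      1 / (1 + lam) * (1 / x) * (LBINT t=ereal 0..ereal x. deg_integrand lam t)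
      + (1 / x) * (lam / (1 + lam)^2) * (deg_exp lam x - 1)
      + (lam / (1 + lam))^2 * deg_exp lam x"
proof -
  define a where "a = acoef lam"
  define fb where "fb = (\<lambda>n. a n / real n)"
  define g where "g = (\<lambda>n. a (Suc n))"
  define F where "F = (\<lambda>t. \<Sum>n. fb n * t ^ n)"
  define G where "G = (\<lambda>t. \<Sum>n. g n * t ^ n)"
  define r where "r = 1 / \<bar>lam\<bar>"
  have dfb: "diffs fb = g"
    by (auto simp: diffs_def fb_def g_def fun_eq_iff)
  have sfb: "summable (\<lambda>n. fb n * t ^ n)" if "norm t < r" for t
    using that unfolding r_def fb_def a_def
    by (intro summable_bound[OF l0]) (simp_all only: absdiv_nat real_norm_def)
  have sg: "summable (\<lambda>n. g n * t ^ n)" if "norm t < r" for t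
  proof (cases "t = 0")
    case True then show ?thesis by simp
  next
    case False
    have "summable (\<lambda>n. a n * t ^ n)"
      using summable_norm_cancel[OF abs_summable[OF l0, of t]] that
      unfolding r_def a_def by simp
    then have "summable (\<lambda>n. a (Suc n) * t ^ (Suc n))"
      by (subst summable_Suc_iff)
    then have "summable (\<lambda>n. (a (Suc n) * t ^ (Suc n)) / t)" by (rule summable_divide)
    then show ?thesis using False by (simp add: g_def)
  qed
  have dF: "(F has_field_derivative G t) (at t)" if "norm t < r" for t
    unfolding F_def G_def using termdiffs_strong'[of r fb t] sfb that dfb by simp
  have dG: "(G has_field_derivative (\<Sum>n. diffs g n * t ^ n)) (at t)" if "norm t < r" for t
    unfolding G_def using termdiffs_strong'[of r g t] sg that by simp
  have GI: "G t = deg_integrand lam t" if "norm t < r" for t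
  proof (cases "t = 0")
    case True
    show ?thesis unfolding G_def True by (simp only: powser_zero) (simp add: g_def a_def acoef_Suc deg_integrand_def)
  next
    case False
    have "(\<lambda>n. a n * t ^ n) sums deg_exp lam t"
      using exp_sums[OF l0, of t] that unfolding a_def r_def by simp
    then have "(\<lambda>n. a (Suc n) * t ^ Suc n) sums (deg_exp lam t - 1)"
      by (subst sums_Suc_iff) (simp add: a_def)
    then have "(\<lambda>n. (a (Suc n) * t ^ Suc n) / t) sums ((deg_exp lam t - 1) / t)"
      by (rule sums_divide)
    then have "(\<lambda>n. g n * t ^ n) sums ((deg_exp lam t - 1) / t)"
      using False by (simp add: g_def)
    then show ?thesis using False by (simp add: G_def deg_integrand_def sums_iff)
  qed
  have sub: "norm t < r" if "min 0 x \<le> t" "t \<le> max 0 x" for t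
    using that xr unfolding r_def by auto
  have cont: "continuous_on {min 0 x..max 0 x} (deg_integrand lam)"
  proof -
    have "continuous_on {min 0 x..max 0 x} G"
      using dG sub by (intro continuous_at_imp_continuous_on ballI DERIV_isCont) auto
    then show ?thesis
      by (rule continuous_on_cong[THEN iffD1, rotated 2]) (use GI sub in auto)
  qed
  have int: "(LBINT t=ereal 0..ereal x. deg_integrand lam t) = F x - F 0"
  proof (rule interval_integral_FTC_finite[OF cont])
    fix t assume t: "min 0 x \<le> t" "t \<le> max 0 x"
    have "(F has_field_derivative deg_integrand lam t) (at t)"
      using dF[OF sub[OF t]] GI[OF sub[OF t]] by simp
    then show "(F has_vector_derivative deg_integrand lam t) (at t within {min 0 x..max 0 x})"
      by (simp add: has_real_derivative_iff_has_vector_derivative[symmetric] has_field_derivative_at_within)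
  qed
  have F0: "F 0 = 0" unfolding F_def by (simp only: powser_zero) (simp add: fb_def)
  define c1 where "c1 = (\<lambda>n. a n / (real n + 1) * x ^ n)"
  define c2 where "c2 = (\<lambda>n. a n / (real n + 1)^2 * x ^ n)"
  define e where "e = (\<lambda>n. a n * x ^ n)"
  have xr': "norm x < r" using xr by (simp add: r_def)
  have s1: "summable c1" unfolding c1_def
    using xr unfolding a_def by (intro summable_bound[OF l0]) (simp_all only: absdiv_Suc)
  have s2: "summable c2" unfolding c2_def
    using xr unfolding a_def by (intro summable_bound[OF l0]) (simp_all only: absdiv_Suc2)
  have se: "e sums deg_exp lam x" unfolding e_def a_def using exp_sums[OF l0 xr] .
  have P: "deg_polyexp lam x 1 2 = suminf c2"
    by (simp add: deg_polyexp_def c2_def a_def acoef_def)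
  have A: "F x = x * ((1 + lam) * suminf c2 - lam * suminf c1)"
  proof -
    have "(\<lambda>n. fb n * x ^ n) sums F x" using sfb[OF xr'] by (simp add: F_def sums_iff)
    then have "(\<lambda>n. fb (Suc n) * x ^ Suc n) sums F x"
      by (subst sums_Suc_iff) (simp add: fb_def)
    moreover have "(\<lambda>n. fb (Suc n) * x ^ Suc n) = (\<lambda>n. x * ((1 + lam) * c2 n - lam * c1 n))"
      unfolding fun_eq_iff fb_def c1_def c2_def a_def acoef_Suc
      using alg1[of "real n" "acoef lam n" lam x "x ^ n" for n] by (simp add: add.commute)
    moreover have "(\<lambda>n. x * ((1 + lam) * c2 n - lam * c1 n)) sums (x * ((1 + lam) * suminf c2 - lam * suminf c1))"
      using s1 s2 by (intro sums_mult sums_diff summable_sums)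
    ultimately show ?thesis using sums_unique2 by metis
  qed
  have B: "deg_exp lam x - 1 = x * ((1 + lam) * suminf c1 - lam * deg_exp lam x)"
  proof -
    have "(\<lambda>n. e (Suc n)) sums (deg_exp lam x - 1)"
      using se by (subst sums_Suc_iff) (simp add: e_def a_def)
    moreover have "(\<lambda>n. e (Suc n)) = (\<lambda>n. x * ((1 + lam) * c1 n - lam * e n))"
      unfolding fun_eq_iff e_def c1_def a_def acoef_Suc
      using alg2[of "real n" "acoef lam n" lam x "x ^ n" for n] by (simp add: add.commute)
    moreover have "(\<lambda>n. x * ((1 + lam) * c1 n - lam * e n)) sums (x * ((1 + lam) * suminf c1 - lam * deg_exp lam x))"
      using s1 se by (intro sums_mult sums_diff summable_sums)
    ultimately show ?thesis using sums_unique2 by metis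
  qed
  have xne: "x \<noteq> 0" using x0 by auto
  have l1': "1 + lam \<noteq> 0" using l1 by linarith
  have S2: "suminf c2 = (F x / x + lam * suminf c1) / (1 + lam)"
    using A xne l1' by (simp add: divide_simps)
  have S1: "suminf c1 = ((deg_exp lam x - 1) / x + lam * deg_exp lam x) / (1 + lam)"
    using B xne l1' by (simp add: divide_simps)
  show ?thesis
    unfolding P int F0 using alg3[OF xne l1' S2 S1] by simp
qed

theorem lemma2:
  fixes lam x :: real
  assumes "lam \<noteq> 0" and "lam \<noteq> -1"
    and "0 < \<bar>x\<bar>" and "\<bar>x\<bar> < 1 / \<bar>lam\<bar>"
  shows "deg_polyexp lam x 1 2 =
      1 / (1 + lam) * (1 / x) * (LBINT t=ereal 0..ereal x. deg_integrand lam t)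
      + (1 / x) * (lam / (1 + lam)^2) * (deg_exp lam x - 1)
      + (lam / (1 + lam))^2 * deg_exp lam x"
  using main_identity[OF assms] .

end
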